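(* Let $D=(E,\mathcal F)$ be a delta-matroid and let $X$ be a subset of $E$ that is not feasible, i.e. $X\notin\mathcal F$. Let $\mathcal B$ be the collection of all sets $Y\subseteq E$ such that $X\triangle Y\in\mathcal F$ and $|Y|$ is minimum among all subsets $Y'\subseteq E$ with $X\triangle Y'\in\mathcal F$. Then $\mathcal B$ is the collection of bases of a matroid with ground set $E$.
   Context: A delta-matroid $(E,\mathcal F)$ consists of a finite ground set $E$ and a non-empty collection $\mathcal F$ of subsets of $E$ (the feasible sets) satisfying the symmetric exchange axiom: for all $X,Y\in\mathcal F$ and every $e\in X\triangle Y$ there exists $f\in X\triangle Y$ (possibly $f=e$) with $X\triangle\{e,f\}\in\mathcal F$. *)

theory Defs
  imports Main
begin

definition symdiff :: "'a set \<Rightarrow> 'a set \<Rightarrow> 'a set" (infixl "\<triangle>" 70) where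
  "A \<triangle> B = (A - B) \<union> (B - A)"

definition delta_matroid :: "'a set \<Rightarrow> 'a set set \<Rightarrow> bool" where
  "delta_matroid E F \<longleftrightarrow> finite E \<and> F \<noteq> {} \<and> (\<forall>X\<in>F. X \<subseteq> E) \<and>
     (\<forall>X\<in>F. \<forall>Y\<in>F. \<forall>e\<in>X \<triangle> Y. \<exists>f\<in>X \<triangle> Y. X \<triangle> {e, f} \<in> F)"

definition matroid_bases :: "'a set \<Rightarrow> 'a set set \<Rightarrow> bool" where
  "matroid_bases E \<B> \<longleftrightarrow> finite E \<and> \<B> \<noteq> {} \<and> (\<forall>B\<in>\<B>. B \<subseteq> E) \<and>
     (\<forall>B1\<in>\<B>. \<forall>B2\<in>\<B>. \<forall>x\<in>B1 - B2. \<exists>y\<in>B2 - B1. insert y (B1 - {x}) \<in> \<B>)"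

end

theory Submission
  imports Defs
begin

lemma sd_inv: "X \<triangle> (X \<triangle> Y) = Y" unfolding symdiff_def by auto
lemma sd_cancel: "(X \<triangle> A) \<triangle> (X \<triangle> B) = A \<triangle> B" unfolding symdiff_def by auto
lemma sd_assoc: "(X \<triangle> Y) \<triangle> S = X \<triangle> (Y \<triangle> S)" unfolding symdiff_def by auto

theorem lemma4p3:
  fixes E :: "'a set" and F :: "'a set set" and X :: "'a set"
  assumes "delta_matroid E F"
    and "X \<subseteq> E"
    and "X \<notin> F"
  shows "matroid_bases E
           {Y. Y \<subseteq> E \<and> X \<triangle> Y \<in> F \<and>
               (\<forall>Y'. Y' \<subseteq> E \<and> X \<triangle> Y' \<in> F \<longrightarrow> card Y \<le> card Y')}"
proof -
  let ?B = "{Y. Y \<subseteq> E \<and> X \<triangle> Y \<in> F \<and>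
               (\<forall>Y'. Y' \<subseteq> E \<and> X \<triangle> Y' \<in> F \<longrightarrow> card Y \<le> card Y')}"
  have fE: "finite E" and Fne: "F \<noteq> {}" and FE: "\<forall>Z\<in>F. Z \<subseteq> E"
    and ex: "\<forall>Z1\<in>F. \<forall>Z2\<in>F. \<forall>e\<in>Z1 \<triangle> Z2. \<exists>f\<in>Z1 \<triangle> Z2. Z1 \<triangle> {e, f} \<in> F"
    using assms(1) unfolding delta_matroid_def by auto
  have ne: "?B \<noteq> {}"
  proof -
    obtain Z where Z: "Z \<in> F" using Fne by auto
    have P: "X \<triangle> Z \<subseteq> E \<and> X \<triangle> (X \<triangle> Z) \<in> F"
      using Z FE assms(2) unfolding sd_inv by (auto simp: symdiff_def)
    obtain Y where "(Y \<subseteq> E \<and> X \<triangle> Y \<in> F) \<and> (\<forall>Y'. Y' \<subseteq> E \<and> X \<triangle> Y' \<in> F \<longrightarrow> card Y \<le> card Y')"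
      using ex_has_least_nat[where P="\<lambda>Y. Y \<subseteq> E \<and> X \<triangle> Y \<in> F" and m=card, OF P] by blast
    thus ?thesis by blast
  qed
  have exch: "\<exists>y\<in>B2 - B1. insert y (B1 - {x}) \<in> ?B"
    if B1: "B1 \<in> ?B" and B2: "B2 \<in> ?B" and x: "x \<in> B1 - B2" for B1 B2 x
  proof -
    have Z1: "X \<triangle> B1 \<in> F" and Z2: "X \<triangle> B2 \<in> F" using B1 B2 by auto
    have xin: "x \<in> (X \<triangle> B1) \<triangle> (X \<triangle> B2)" using x by (simp add: sd_cancel symdiff_def)
    obtain f where f: "f \<in> B1 \<triangle> B2" and fF: "X \<triangle> (B1 \<triangle> {x, f}) \<in> F"
    proof -
      obtain f where "f \<in> (X \<triangle> B1) \<triangle> (X \<triangle> B2)" "(X \<triangle> B1) \<triangle> {x, f} \<in> F"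
        using ex[rule_format, OF Z1 Z2 xin] by blast
      thus ?thesis using that[of f] sd_cancel[of X B1 B2] sd_assoc[of X B1 "{x,f}"] by simp
    qed
    have B1E: "B1 \<subseteq> E" and B2E: "B2 \<subseteq> E" using B1 B2 by auto
    have fB1: "finite B1" using B1E fE finite_subset by auto
    have sub: "B1 \<triangle> {x, f} \<subseteq> E" using f x B1E B2E by (auto simp: symdiff_def)
    have minY: "\<forall>Y'. Y' \<subseteq> E \<and> X \<triangle> Y' \<in> F \<longrightarrow> card B1 \<le> card Y'" using B1 by simp
    have min: "card B1 \<le> card (B1 \<triangle> {x, f})" using minY sub fF by blast
    show ?thesis
    proof (cases "f \<in> B1")
      case True
      hence "B1 \<triangle> {x, f} = B1 - {x, f}" using x by (auto simp: symdiff_def)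
      moreover have "card (B1 - {x, f}) < card B1"
        using fB1 x by (intro psubset_card_mono) blast+
      ultimately show ?thesis using min by simp
    next
      case False
      hence fB2: "f \<in> B2 - B1" using f by (auto simp: symdiff_def)
      have eq: "B1 \<triangle> {x, f} = insert f (B1 - {x})" using x False by (auto simp: symdiff_def)
      have "card (insert f (B1 - {x})) = card B1"
      proof -
        have "x \<in> B1" using x by simp
        hence c0: "card B1 > 0" using fB1 card_gt_0_iff by blast
        have "card (insert f (B1 - {x})) = Suc (card (B1 - {x}))"
          using fB1 False by (intro card_insert_disjoint) auto
        also have "card (B1 - {x}) = card B1 - 1" using \<open>x \<in> B1\<close> by (rule card_Diff_singleton)
        finally show ?thesis using c0 by simp
      qed
      hence "insert f (B1 - {x}) \<in> ?B" using sub fF minY unfolding eq mem_Collect_eq by simp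
      thus ?thesis using fB2 by blast
    qed
  qed
  have sub: "\<forall>B\<in>?B. B \<subseteq> E" by simp
  have ex2: "\<forall>B1\<in>?B. \<forall>B2\<in>?B. \<forall>x\<in>B1 - B2. \<exists>y\<in>B2 - B1. insert y (B1 - {x}) \<in> ?B"
    using exch by (intro ballI)
  show ?thesis unfolding matroid_bases_def using fE ne sub ex2 by (intro conjI)
qed

end
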